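(* Let $\mathcal F:\mathbb{R}^p\to\mathbb{R}^n$, $y\in\mathbb{R}^n$, $L(w)=\frac12\|\mathcal F(w)-y\|^2$, and let $w_0\in\mathbb{R}^p$. Assume $\mathcal F$ is $\mathcal L_{\mathcal F}$-Lipschitz, $L$ is $\beta_L$-smooth, and $L$ is $\mu$-PL$^\star$ in $B(w_0,2R)$ with $R=\frac{2\sqrt{2\beta_LL(w_0)}}{\mu}$. Let $\varepsilon\in(0,1)$, let $M,\varepsilon_{\mathrm{loc}}$ be as in the context, and set $\rho=\min\big\{\frac{\varepsilon_{\mathrm{loc}}}{19\sqrt{\beta_L/\mu}},\sqrt\mu R,R\big\}$. Run gradient descent $w_{k+1}=w_k-\frac1{\beta_L}\nabla L(w_k)$ from $w_0$ for $k=\frac{\beta_L}{\mu}\log\Big(\frac{4\max\{2\beta_L,1\}L(w_0)}{\mu\rho^2}\Big)$ iterations. Then gradient descent outputs a point $w_{\mathrm{loc}}$ satisfying $$L(w_{\mathrm{loc}})\le\frac{\mu\rho^2}{4}\min\Big\{1,\frac1{2\beta_L}\Big\},\qquad \|w_{\mathrm{loc}}-w_\star\|_{H_L(w_\star)+\mu I}\le\rho\ \text{ for some } w_\star\in\mathcal W_\star.$$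
   Context: $\mathcal W_\star$ is the set of minimizers of $L$ (global minimizers with $L=0$). $H_L$ is the Hessian of $L$; $\|v\|_A=\sqrt{v^TAv}$. $L$ is $\mu$-PL$^\star$ on a set $S$ if $\frac12\|\nabla L(w)\|^2\ge\mu L(w)$ for all $w\in S$. $\mathcal L_{H_L}$ is the Lipschitz constant of $H_L$ on $B(w_0,2R)$; $\mathcal L_{J_{\mathcal F}}=\sup_{w\in B(w_0,2R)}\max_{i\in[n]}\|H_{\mathcal F_i}(w)\|$ where $H_{\mathcal F_i}$ is the Hessian of the $i$-th component of $\mathcal F$; $M=\max\{\mathcal L_{H_L},\mathcal L_{J_{\mathcal F}},\mathcal L_{\mathcal F}\mathcal L_{J_{\mathcal F}},1\}$ and $\varepsilon_{\mathrm{loc}}=\frac{\varepsilon\mu^{3/2}}{4M}$. *)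

theory Defs
  imports "HOL-Analysis.Analysis"
begin

primrec gd :: "('a::real_vector \<Rightarrow> 'a) \<Rightarrow> real \<Rightarrow> 'a \<Rightarrow> nat \<Rightarrow> 'a" where
  "gd g \<beta> w0 0 = w0"
| "gd g \<beta> w0 (Suc k) = gd g \<beta> w0 k - (1 / \<beta>) *\<^sub>R g (gd g \<beta> w0 k)"

definition opnorm :: "real^'p^'m \<Rightarrow> real" where
  "opnorm A = onorm (\<lambda>x. A *v x)"

definition Anorm :: "real^'p^'p \<Rightarrow> real^'p \<Rightarrow> real" where
  "Anorm A v = sqrt (v \<bullet> (A *v v))"

definition lip_quots :: "(real^'p) set \<Rightarrow> (real^'p \<Rightarrow> real^'q^'r) \<Rightarrow> real set" where
  "lip_quots S H = {opnorm (H u - H v) / norm (u - v) | u v. u \<in> S \<and> v \<in> S \<and> u \<noteq> v}"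

definition lip_const :: "(real^'p) set \<Rightarrow> (real^'p \<Rightarrow> real^'q^'r) \<Rightarrow> real" where
  "lip_const S H = Sup (lip_quots S H)"

definition hess_vals :: "(real^'p) set \<Rightarrow> (real^'p \<Rightarrow> 'n::finite \<Rightarrow> real^'p^'p) \<Rightarrow> real set" where
  "hess_vals S HF = {Max (range (\<lambda>i. opnorm (HF w i))) | w. w \<in> S}"

definition hess_bound :: "(real^'p) set \<Rightarrow> (real^'p \<Rightarrow> 'n::finite \<Rightarrow> real^'p^'p) \<Rightarrow> real" where
  "hess_bound S HF = Sup (hess_vals S HF)"

end

theory Submission
  imports Defs
begin

lemma mono_deriv:
  fixes f f' :: "real \<Rightarrow> real"
  assumes "a \<le> b" "\<And>x. a \<le> x \<Longrightarrow> x \<le> b \<Longrightarrow> (f has_real_derivative f' x) (at x)"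
    "\<And>x. a \<le> x \<Longrightarrow> x \<le> b \<Longrightarrow> f' x \<ge> 0"
  shows "f a \<le> f b"
proof (cases "a = b")
  case False
  then have ab: "a < b" using assms by simp
  from MVT2[OF ab, of f f'] assms(2) obtain z where z: "a < z" "z < b" "f b - f a = (b - a) * f' z"
    by blast
  have "(b - a) * f' z \<ge> 0" using assms(3)[of z] z ab by simp
  then show ?thesis using z by linarith
qed simp

lemma line_deriv:
  assumes "\<And>w. (L has_derivative (\<lambda>h. G w \<bullet> h)) (at w)"
  shows "((\<lambda>t. L (x + t *\<^sub>R d)) has_real_derivative (G (x + t *\<^sub>R d) \<bullet> d)) (at t)"
proof -
  have "((\<lambda>t. x + t *\<^sub>R d) has_derivative (\<lambda>h. h *\<^sub>R d)) (at t)"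
    by (auto intro!: derivative_eq_intros)
  from has_derivative_compose[OF this assms]
  have "((\<lambda>t. L (x + t *\<^sub>R d)) has_derivative (\<lambda>h. G (x + t *\<^sub>R d) \<bullet> (h *\<^sub>R d))) (at t)" .
  then show ?thesis unfolding has_field_derivative_def
    by (rule has_derivative_eq_rhs) (auto simp: fun_eq_iff)
qed

lemma line_deriv2:
  fixes G :: "real^'p \<Rightarrow> real^'p"
  assumes "\<And>w. (G has_derivative (\<lambda>h. H w *v h)) (at w)"
  shows "((\<lambda>t. G (x + t *\<^sub>R d) \<bullet> d) has_real_derivative ((H (x + t *\<^sub>R d) *v d) \<bullet> d)) (at t)"
proof -
  have "((\<lambda>t. x + t *\<^sub>R d) has_derivative (\<lambda>h. h *\<^sub>R d)) (at t)"
    by (auto intro!: derivative_eq_intros)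
  from has_derivative_compose[OF this assms]
  have "((\<lambda>t. G (x + t *\<^sub>R d)) has_derivative (\<lambda>h. H (x + t *\<^sub>R d) *v (h *\<^sub>R d))) (at t)" .
  from has_derivative_inner_left[OF this, of d]
  show ?thesis unfolding has_field_derivative_def
    by (rule has_derivative_eq_rhs) (simp add: fun_eq_iff matrix_scaleR_vector_ac scaleR_matrix_vector_assoc[symmetric])
qed

lemma descent:
  fixes L :: "real^'p \<Rightarrow> real"
  assumes Lg: "\<And>w. (L has_derivative (\<lambda>h. G w \<bullet> h)) (at w)"
    and lip: "\<beta>-lipschitz_on UNIV G"
  shows "L (x + d) \<le> L x + G x \<bullet> d + \<beta>/2 * (norm d)^2"
proof -
  define \<psi> where "\<psi> t = L x + t * (G x \<bullet> d) + \<beta>/2 * t^2 * (norm d)^2 - L (x + t *\<^sub>R d)" for t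
  have "\<psi> 0 \<le> \<psi> 1"
  proof (rule mono_deriv[where f=\<psi> and a=0 and b=1 and f'="\<lambda>t. G x \<bullet> d + \<beta> * t * (norm d)^2 - G (x + t *\<^sub>R d) \<bullet> d"])
    fix t :: real assume "0 \<le> t" "t \<le> 1"
    show "(\<psi> has_real_derivative G x \<bullet> d + \<beta> * t * (norm d)\<^sup>2 - G (x + t *\<^sub>R d) \<bullet> d) (at t)"
      unfolding \<psi>_def[abs_def]
      by (auto intro!: derivative_eq_intros line_deriv[OF Lg])
  next
    fix t :: real assume t: "0 \<le> t" "t \<le> 1"
    have "(G (x + t *\<^sub>R d) - G x) \<bullet> d \<le> norm (G (x + t *\<^sub>R d) - G x) * norm d"
      by (rule norm_cauchy_schwarz)
    also have "norm (G (x + t *\<^sub>R d) - G x) \<le> \<beta> * norm (t *\<^sub>R d)"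
      using lipschitz_onD[OF lip, of "x + t *\<^sub>R d" x] by (simp add: dist_norm)
    then have "norm (G (x + t *\<^sub>R d) - G x) * norm d \<le> \<beta> * norm (t *\<^sub>R d) * norm d"
      by (simp add: mult_right_mono)
    also have "\<beta> * norm (t *\<^sub>R d) * norm d = \<beta> * t * (norm d)^2"
      using t by (simp add: power2_eq_square)
    finally show "0 \<le> G x \<bullet> d + \<beta> * t * (norm d)\<^sup>2 - G (x + t *\<^sub>R d) \<bullet> d"
      by (simp add: inner_diff_left)
  qed simp
  then show ?thesis by (simp add: \<psi>_def)
qed

lemma taylor_lb:
  fixes L :: "real^'p \<Rightarrow> real"
  assumes Lg: "\<And>w. (L has_derivative (\<lambda>h. G w \<bullet> h)) (at w)"
    and Hg: "\<And>w. (G has_derivative (\<lambda>h. H w *v h)) (at w)"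
    and L0: "L ws = 0" and G0: "G ws = 0"
    and hb: "\<And>t. 0 \<le> t \<Longrightarrow> t \<le> 1 \<Longrightarrow> v \<bullet> (H (ws + t *\<^sub>R v) *v v) \<ge> v \<bullet> (H ws *v v) - c"
  shows "v \<bullet> (H ws *v v) \<le> 2 * L (ws + v) + c"
proof -
  define a where "a = v \<bullet> (H ws *v v)"
  have s1: "G (ws + t *\<^sub>R v) \<bullet> v \<ge> (a - c) * t" if t: "0 \<le> t" "t \<le> 1" for t
  proof -
    define chi where "chi s = G (ws + s *\<^sub>R v) \<bullet> v - (a - c) * s" for s
    have "chi 0 \<le> chi t"
    proof (rule mono_deriv[where f=chi and a=0 and b=t and f'="\<lambda>s. (H (ws + s *\<^sub>R v) *v v) \<bullet> v - (a - c)"])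
      fix s :: real assume "0 \<le> s" "s \<le> t"
      show "(chi has_real_derivative (H (ws + s *\<^sub>R v) *v v) \<bullet> v - (a - c)) (at s)"
        unfolding chi_def[abs_def] by (auto intro!: derivative_eq_intros line_deriv2[OF Hg])
    next
      fix s :: real assume "0 \<le> s" "s \<le> t"
      then show "0 \<le> (H (ws + s *\<^sub>R v) *v v) \<bullet> v - (a - c)"
        using hb[of s] t unfolding a_def by (simp add: inner_commute)
    qed (use t in simp)
    then show ?thesis by (simp add: G0 chi_def)
  qed
  define \<psi> where "\<psi> s = L (ws + s *\<^sub>R v) - (a - c) * s^2 / 2" for s
  have "\<psi> 0 \<le> \<psi> 1"
  proof (rule mono_deriv[where f=\<psi> and a=0 and b=1 and f'="\<lambda>s. G (ws + s *\<^sub>R v) \<bullet> v - (a - c) * s"])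
    fix s :: real assume "0 \<le> s" "s \<le> 1"
    show "(\<psi> has_real_derivative G (ws + s *\<^sub>R v) \<bullet> v - (a - c) * s) (at s)"
      unfolding \<psi>_def[abs_def] by (auto intro!: derivative_eq_intros line_deriv[OF Lg])
  next
    fix s :: real assume "0 \<le> s" "s \<le> 1"
    then show "0 \<le> G (ws + s *\<^sub>R v) \<bullet> v - (a - c) * s" using s1[of s] by simp
  qed simp
  then show ?thesis by (simp add: L0 a_def \<psi>_def)
qed

theorem mainTheorem5:
  fixes F :: "real^'p \<Rightarrow> real^'n"
    and y :: "real^'n"
    and w0 :: "real^'p"
    and J :: "real^'p \<Rightarrow> real^'p^'n"
    and HF :: "real^'p \<Rightarrow> 'n \<Rightarrow> real^'p^'p"
    and L :: "real^'p \<Rightarrow> real"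
    and gradL :: "real^'p \<Rightarrow> real^'p"
    and HL :: "real^'p \<Rightarrow> real^'p^'p"
    and LF \<beta> \<mu> \<epsilon> R M \<epsilon>loc \<rho> :: real
    and k :: nat
  assumes L_def: "\<And>w. L w = (1/2) * (norm (F w - y))\<^sup>2"
    and F_deriv: "\<And>w. (F has_derivative (\<lambda>h. J w *v h)) (at w)"
    and F_hess: "\<And>w i. ((\<lambda>v. J v $ i) has_derivative (\<lambda>h. HF w i *v h)) (at w)"
    and L_grad: "\<And>w. (L has_derivative (\<lambda>h. gradL w \<bullet> h)) (at w)"
    and L_hess: "\<And>w. (gradL has_derivative (\<lambda>h. HL w *v h)) (at w)"
    and F_lip: "LF-lipschitz_on UNIV F"
    and L_smooth: "\<beta>-lipschitz_on UNIV gradL"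
    and \<beta>_pos: "\<beta> > 0"
    and \<mu>_pos: "\<mu> > 0"
    and R_def: "R = 2 * sqrt (2 * \<beta> * L w0) / \<mu>"
    and PL: "\<forall>w\<in>cball w0 (2 * R). (1/2) * (norm (gradL w))\<^sup>2 \<ge> \<mu> * L w"
    and HL_lip: "bdd_above (lip_quots (cball w0 (2 * R)) HL)"
    and HF_bdd: "bdd_above (hess_vals (cball w0 (2 * R)) HF)"
    and \<epsilon>_bounds: "0 < \<epsilon>" "\<epsilon> < 1"
    and M_def: "M = Max {lip_const (cball w0 (2 * R)) HL, hess_bound (cball w0 (2 * R)) HF,
                        LF * hess_bound (cball w0 (2 * R)) HF, 1}"
    and \<epsilon>loc_def: "\<epsilon>loc = \<epsilon> * \<mu> powr (3/2) / (4 * M)"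
    and \<rho>_def: "\<rho> = Min {\<epsilon>loc / (19 * sqrt (\<beta> / \<mu>)), sqrt \<mu> * R, R}"
    and k_def: "k = nat \<lceil>(\<beta> / \<mu>) * ln (4 * max (2 * \<beta>) 1 * L w0 / (\<mu> * \<rho>\<^sup>2))\<rceil>"
  shows "L (gd gradL \<beta> w0 k) \<le> (\<mu> * \<rho>\<^sup>2 / 4) * min 1 (1 / (2 * \<beta>))
       \<and> (\<exists>ws\<in>{w. L w = 0}. Anorm (HL ws + \<mu> *\<^sub>R mat 1) (gd gradL \<beta> w0 k - ws) \<le> \<rho>)"
proof -
  have Lnn: "L x \<ge> 0" for x by (simp add: L_def)
  define w where "w = gd gradL \<beta> w0"
  have wS: "w (Suc t) = w t - (1/\<beta>) *\<^sub>R gradL (w t)" for t by (simp add: w_def)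
  have w0: "w 0 = w0" by (simp add: w_def)
  have desc: "L (x - (1/\<beta>) *\<^sub>R gradL x) \<le> L x - (norm (gradL x))^2/(2*\<beta>)" for x
  proof -
    have "L (x + (-(1/\<beta>) *\<^sub>R gradL x)) \<le> L x + gradL x \<bullet> (-(1/\<beta>) *\<^sub>R gradL x)
          + \<beta>/2 * (norm (-(1/\<beta>) *\<^sub>R gradL x))^2"
      by (rule descent[OF L_grad L_smooth])
    also have "\<dots> = L x - (norm (gradL x))^2/(2*\<beta>)"
      using \<beta>_pos by (simp add: dot_square_norm field_simps power2_eq_square)
    finally show ?thesis by simp
  qed
  have gb: "(norm (gradL x))^2 \<le> 2*\<beta>*L x" for x
  proof -
    have "0 \<le> L x - (norm (gradL x))^2/(2*\<beta>)" using desc[of x] Lnn[of "x - (1/\<beta>) *\<^sub>R gradL x"] by linarith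
    then show ?thesis using \<beta>_pos by (simp add: field_simps)
  qed
  have fin: "finite {lip_const (cball w0 (2 * R)) HL, hess_bound (cball w0 (2 * R)) HF,
                        LF * hess_bound (cball w0 (2 * R)) HF, 1}" by simp
  have M1: "M \<ge> 1" unfolding M_def by (rule Max_ge[OF fin]) simp
  have Mlip: "M \<ge> lip_const (cball w0 (2 * R)) HL" unfolding M_def by (rule Max_ge[OF fin]) simp
  have R0: "R \<ge> 0" using R_def \<mu>_pos \<beta>_pos Lnn[of w0] by simp
  have eloc0: "\<epsilon>loc > 0" using \<epsilon>loc_def \<epsilon>_bounds \<mu>_pos M1 by simp
  have finr: "finite {\<epsilon>loc / (19 * sqrt (\<beta> / \<mu>)), sqrt \<mu> * R, R}" by simp
  have rho0: "\<rho> \<ge> 0" unfolding \<rho>_def using eloc0 R0 \<beta>_pos \<mu>_pos by (simp add: Min_ge_iff[OF finr])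
  have minq: "min 1 (1 / (2 * \<beta>)) > 0" using \<beta>_pos by simp
  show ?thesis
  proof (cases "L w0 = 0")
    case True
    then have "k = 0" using k_def by simp
    then have gk: "gd gradL \<beta> w0 k = w0" by simp
    show ?thesis unfolding gk
    proof
      show "L w0 \<le> \<mu> * \<rho>\<^sup>2 / 4 * min 1 (1 / (2 * \<beta>))" using True \<mu>_pos minq by simp
      show "\<exists>ws\<in>{w. L w = 0}. Anorm (HL ws + \<mu> *\<^sub>R mat 1) (w0 - ws) \<le> \<rho>"
        using True rho0 by (intro bexI[of _ w0]) (auto simp: Anorm_def)
    qed
  next
    case False
    then have L0pos: "L w0 > 0" using Lnn[of w0] by simp
    then have Rpos: "R > 0" using R_def \<mu>_pos \<beta>_pos by simp
    have rhopos: "\<rho> > 0" unfolding \<rho>_def using eloc0 Rpos \<beta>_pos \<mu>_pos by (simp add: Min_gr_iff[OF finr])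
    have w0ball: "w0 \<in> cball w0 (2*R)" using R0 by simp
    have mub: "\<mu> \<le> \<beta>"
    proof -
      have "\<mu> * L w0 \<le> (1/2) * (norm (gradL w0))^2" using PL w0ball by blast
      then have "\<mu> * L w0 \<le> \<beta> * L w0" using gb[of w0] by linarith
      then show ?thesis using L0pos by simp
    qed
    define q where "q = sqrt (1 - \<mu>/\<beta>)"
    have q0: "q \<ge> 0" and q2: "q^2 = 1 - \<mu>/\<beta>" and q1: "q < 1"
      using mub \<beta>_pos \<mu>_pos by (auto simp: q_def)
    define K where "K = (1+q) * sqrt (2/\<mu>)"
    have Kpos: "K > 0" using q0 \<mu>_pos by (simp add: K_def)
    define s where "s t = sqrt (L (w t))" for t
    have s0: "s t \<ge> 0" for t by (simp add: s_def Lnn)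
    have step: "norm ((1/\<beta>) *\<^sub>R gradL x) \<le> K * (sqrt (L x) - sqrt (L (x - (1/\<beta>) *\<^sub>R gradL x)))
              \<and> L (x - (1/\<beta>) *\<^sub>R gradL x) \<le> q^2 * L x"
      if xb: "x \<in> cball w0 (2*R)" for x
    proof -
      define G where "G = norm (gradL x)"
      define a where "a = L x"
      define b where "b = L (x - (1/\<beta>) *\<^sub>R gradL x)"
      have ba: "b \<le> a - G^2/(2*\<beta>)" using desc[of x] by (simp add: a_def b_def G_def)
      have b0: "b \<ge> 0" by (simp add: b_def Lnn)
      have pl: "\<mu> * a \<le> G^2/2" using PL xb by (auto simp: a_def G_def)
      have "G^2/(2*\<beta>) \<ge> \<mu> * a / \<beta>" using pl \<beta>_pos by (simp add: field_simps)
      then have "b \<le> a - \<mu> * a / \<beta>" using ba by linarith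
      also have "a - \<mu> * a / \<beta> = q^2 * a" using \<beta>_pos by (simp only: q2) (simp add: field_simps)
      finally have bq: "b \<le> q^2 * a" .
      have "G / \<beta> \<le> K * (sqrt a - sqrt b)"
      proof (cases "G = 0")
        case True
        have "G^2/(2*\<beta>) \<ge> 0" using \<beta>_pos by simp
        then have "sqrt b \<le> sqrt a" using ba by simp
        then show ?thesis using True Kpos by simp
      next
        case False
        then have Gp: "G > 0" by (simp add: G_def)
        define A where "A = sqrt a"
        define B where "B = sqrt b"
        define m where "m = sqrt (2*\<mu>)"
        have mp: "m > 0" using \<mu>_pos by (simp add: m_def)
        have a0: "a \<ge> 0" by (simp add: a_def Lnn)
        have AA: "A^2 = a" using a0 by (simp add: A_def)
        have BB: "B^2 = b" using b0 by (simp add: B_def)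
        have B0: "B \<ge> 0" using b0 by (simp add: B_def)
        have BqA: "B \<le> q * A"
        proof -
          have "sqrt b \<le> sqrt (q^2 * a)" using bq by simp
          also have "\<dots> = q * A" using q0 by (simp add: A_def real_sqrt_mult)
          finally show ?thesis by (simp add: B_def)
        qed
        have AmG: "A * m \<le> G"
        proof -
          have "a * (2*\<mu>) \<le> G^2" using pl by (simp add: algebra_simps)
          then have "sqrt (a * (2*\<mu>)) \<le> sqrt (G^2)" by (rule real_sqrt_le_mono)
          then show ?thesis using Gp by (simp add: A_def m_def real_sqrt_mult)
        qed
        have A0: "A \<ge> 0" using a0 by (simp add: A_def)
        have "q * A \<le> A" using q1 q0 A0 by (simp add: mult_left_le_one_le)
        then have BA: "B \<le> A" using BqA by linarith
        have diff: "(A - B) * (A + B) \<ge> G^2/(2*\<beta>)" using ba AA BB by (simp add: algebra_simps power2_eq_square)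
        have "A + B \<le> (1+q) * A" using BqA by (simp add: algebra_simps)
        also have "(1+q) * A \<le> (1+q) * G / m"
        proof -
          have "A \<le> G/m" using AmG mp by (simp add: pos_le_divide_eq)
          then have "(1+q)*A \<le> (1+q)*(G/m)" using q0 by (intro mult_left_mono) auto
          then show ?thesis by simp
        qed
        finally have "A + B \<le> (1+q) * G / m" .
        then have "(A - B) * (A + B) \<le> (A - B) * ((1+q) * G / m)" using BA by (intro mult_left_mono) auto
        then have "G^2/(2*\<beta>) \<le> (A - B) * ((1+q) * G / m)" using diff by linarith
        then have "G * (G/(2*\<beta>)) \<le> G * ((A - B) * (1+q) / m)" by (simp add: power2_eq_square field_simps)
        then have h: "G/(2*\<beta>) \<le> (A - B) * (1+q) / m" by (rule mult_left_le_imp_le[OF _ Gp])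
        have sq: "sqrt (2/\<mu>) = 2 / m" using \<mu>_pos unfolding m_def
          by (simp add: real_sqrt_divide real_sqrt_mult field_simps)
        have "K * (A - B) = 2 * ((A - B) * (1+q) / m)" by (simp add: K_def sq field_simps)
        then show ?thesis using h \<beta>_pos by (simp add: A_def B_def field_simps)
      qed
      then show ?thesis using bq \<beta>_pos by (simp add: a_def b_def G_def)
    qed
    have L_dec: "L (w (Suc t)) \<le> L (w t)" for t
    proof -
      have "(norm (gradL (w t)))^2/(2*\<beta>) \<ge> 0" using \<beta>_pos by simp
      then show ?thesis using desc[of "w t"] by (simp add: wS)
    qed
    have s_dec: "s (Suc t) \<le> s t" for t using L_dec[of t] by (simp add: s_def)
    have s_mono: "t \<le> m \<Longrightarrow> s m \<le> s t" for t m
      by (induction m rule: dec_induct) (auto intro: order_trans[OF s_dec])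
    have Ks0R: "K * s 0 \<le> R"
    proof -
      have "K * s 0 = (1+q) * sqrt (2 * L w0 / \<mu>)" by (simp add: K_def s_def w0 real_sqrt_mult[symmetric])
      also have "\<dots> \<le> 2 * sqrt (2 * L w0 / \<mu>)" using q1 L0pos \<mu>_pos by (intro mult_right_mono) auto
      also have "sqrt (2 * L w0 / \<mu>) \<le> sqrt (2 * \<beta> * L w0 / \<mu>^2)"
        using mub \<mu>_pos L0pos by (intro real_sqrt_le_mono) (simp add: field_simps power2_eq_square)
      also have "sqrt (2 * \<beta> * L w0 / \<mu>^2) = sqrt (2 * \<beta> * L w0) / \<mu>"
        using \<mu>_pos by (simp add: real_sqrt_divide)
      finally show ?thesis using R_def by simp
    qed
    have stepw: "dist (w j) (w (Suc j)) \<le> K * (s j - s (Suc j)) \<and> L (w (Suc j)) \<le> q^2 * L (w j)"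
      if "w j \<in> cball w0 (2*R)" for j
    proof -
      have "dist (w j) (w (Suc j)) = norm ((1/\<beta>) *\<^sub>R gradL (w j))" by (simp add: wS dist_norm)
      then show ?thesis using step[OF that] by (simp add: s_def wS)
    qed
    have path0: "dist w0 (w j) \<le> K * (s 0 - s j)" for j
    proof (induction j)
      case 0
      then show ?case by (simp add: w0)
    next
      case (Suc j)
      have "K * (s 0 - s j) \<le> K * s 0" using Kpos s0[of j] by simp
      then have "dist w0 (w j) \<le> 2*R" using Suc Ks0R R0 by linarith
      then have "w j \<in> cball w0 (2*R)" by simp
      from stepw[OF this] have "dist (w j) (w (Suc j)) \<le> K * (s j - s (Suc j))" by simp
      moreover have "dist w0 (w (Suc j)) \<le> dist w0 (w j) + dist (w j) (w (Suc j))" by (rule dist_triangle)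
      ultimately show ?case using Suc by (simp add: algebra_simps)
    qed
    have inball: "w j \<in> cball w0 R" for j
    proof -
      have "K * (s 0 - s j) \<le> K * s 0" using Kpos s0[of j] by simp
      then show ?thesis using path0[of j] Ks0R by simp
    qed
    have inball2: "w j \<in> cball w0 (2*R)" for j using inball[of j] R0 by simp
    have path: "dist (w t) (w (t + j)) \<le> K * (s t - s (t + j))" for t j
    proof (induction j)
      case 0
      then show ?case by simp
    next
      case (Suc j)
      have "dist (w (t+j)) (w (Suc (t+j))) \<le> K * (s (t+j) - s (Suc (t+j)))" using stepw[OF inball2] by blast
      moreover have "dist (w t) (w (Suc (t+j))) \<le> dist (w t) (w (t+j)) + dist (w (t+j)) (w (Suc (t+j)))" by (rule dist_triangle)
      ultimately show ?case using Suc by (simp add: algebra_simps)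
    qed
    have Lcontr: "L (w j) \<le> (q^2)^j * L w0" for j
    proof (induction j)
      case 0
      then show ?case by (simp add: w0)
    next
      case (Suc j)
      have "L (w (Suc j)) \<le> q^2 * L (w j)" using stepw[OF inball2] by blast
      also have "\<dots> \<le> q^2 * ((q^2)^j * L w0)" using Suc by (intro mult_left_mono) auto
      finally show ?case by simp
    qed
    have sq: "s j \<le> q^j * s 0" for j
    proof -
      have "s j \<le> sqrt ((q^2)^j * L w0)" using Lcontr[of j] by (simp add: s_def)
      also have "(q^2)^j = (q^j)^2" by (simp only: power_mult[symmetric] mult.commute)
      also have "sqrt ((q^j)^2 * L w0) = q^j * s 0" using q0 by (simp add: s_def w0 real_sqrt_mult)
      finally show ?thesis .
    qed
    have qlim: "(\<lambda>j. q^j) \<longlonglongrightarrow> 0" using q0 q1 by (intro LIMSEQ_power_zero) simp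
    have slim: "(\<lambda>j. K * s j) \<longlonglongrightarrow> 0"
    proof -
      have "(\<lambda>j. K * (q^j * s 0)) \<longlonglongrightarrow> K * (0 * s 0)" by (intro tendsto_intros qlim)
      then have u: "(\<lambda>j. K * (q^j * s 0)) \<longlonglongrightarrow> 0" by simp
      show ?thesis
      proof (rule tendsto_sandwich[OF _ _ tendsto_const u])
        show "\<forall>\<^sub>F n in sequentially. 0 \<le> K * s n" using Kpos s0 by (auto intro!: always_eventually)
        show "\<forall>\<^sub>F n in sequentially. K * s n \<le> K * (q ^ n * s 0)" using Kpos sq by (auto intro!: always_eventually)
      qed
    qed
    have pathle: "dist (w t) (w m) \<le> K * s t" if tm: "t \<le> m" for t m
    proof -
      obtain j where "m = t + j" using le_Suc_ex[OF tm] by (elim exE)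
      have "s t - s m \<le> s t" using s0[of m] by linarith
      then have "K * (s t - s m) \<le> K * s t" using Kpos by (intro mult_left_mono) simp_all
      then show ?thesis using path[of t j] \<open>m = t + j\<close> by simp
    qed
    have "Cauchy w"
    proof (rule metric_CauchyI)
      fix e :: real assume e: "0 < e"
      have "\<forall>\<^sub>F j in sequentially. K * s j < e/2" using order_tendstoD(2)[OF slim, of "e/2"] e by simp
      then obtain N where N: "K * s N < e/2" by (auto simp: eventually_sequentially)
      show "\<exists>M. \<forall>m\<ge>M. \<forall>n\<ge>M. dist (w m) (w n) < e"
      proof (intro exI allI impI)
        fix m n assume "N \<le> m" "N \<le> n"
        then have "dist (w N) (w m) \<le> K * s N" "dist (w N) (w n) \<le> K * s N" using pathle by auto
        moreover have "dist (w m) (w n) \<le> dist (w N) (w m) + dist (w N) (w n)" by (rule dist_triangle3)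
        ultimately show "dist (w m) (w n) < e" using N by linarith
      qed
    qed
    then obtain ws where wlim: "w \<longlonglongrightarrow> ws" using Cauchy_convergent_iff convergent_def by blast
    have dws: "dist (w t) ws \<le> K * s t" for t
    proof -
      have "(\<lambda>m. dist (w t) (w m)) \<longlonglongrightarrow> dist (w t) ws" by (intro tendsto_intros wlim)
      then show ?thesis using pathle[of t] by (intro LIMSEQ_le_const2) auto
    qed
    have wsball: "ws \<in> cball w0 R"
    proof -
      have "dist w0 ws \<le> K * s 0" using dws[of 0] by (simp add: w0)
      then show ?thesis using Ks0R by simp
    qed
    have Lws: "L ws = 0"
    proof -
      have "isCont L ws" using L_grad[of ws] has_derivative_continuous by blast
      from isCont_tendsto_compose[OF this wlim] have l1: "(\<lambda>j. L (w j)) \<longlonglongrightarrow> L ws" .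
      have "(\<lambda>j. (q^2)^j * L w0) \<longlonglongrightarrow> 0 * L w0"
        using q0 q1 by (intro tendsto_intros LIMSEQ_power_zero) (simp add: power_less_one_iff abs_square_less_1)
      then have l2: "(\<lambda>j. (q^2)^j * L w0) \<longlonglongrightarrow> 0" by simp
      have "L ws \<le> 0" using LIMSEQ_le[OF l1 l2] Lcontr by blast
      then show ?thesis using Lnn[of ws] by simp
    qed
    have Gws: "gradL ws = 0" using gb[of ws] Lws by simp
    define v where "v = w k - ws"
    have wk: "gd gradL \<beta> w0 k = w k" by (simp add: w_def)
    have nv: "norm v \<le> K * s k" using dws[of k] by (simp add: v_def dist_norm)
    have sk2: "(s k)^2 = L (w k)" by (simp add: s_def Lnn)
    define X where "X = 4 * max (2*\<beta>) 1 * L w0 / (\<mu> * \<rho>^2)"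
    have Xpos: "X > 0" using L0pos \<mu>_pos rhopos by (simp add: X_def)
    have kge: "(\<beta>/\<mu>) * ln X \<le> real k" unfolding k_def X_def by (rule real_nat_ceiling_ge)
    have lnX: "ln X \<le> real k * (\<mu> / \<beta>)"
    proof -
      have "(\<mu>/\<beta>) * ((\<beta>/\<mu>) * ln X) \<le> (\<mu>/\<beta>) * real k" using kge \<mu>_pos \<beta>_pos by (intro mult_left_mono) auto
      then show ?thesis using \<mu>_pos \<beta>_pos by (simp add: field_simps)
    qed
    have Lk1: "L (w k) \<le> L w0 / X"
    proof -
      have "L (w k) \<le> (q^2)^k * L w0" by (rule Lcontr)
      also have "(q^2)^k \<le> exp (- (\<mu>/\<beta>)) ^ k"
      proof (rule power_mono)
        show "q^2 \<le> exp (- (\<mu>/\<beta>))" using exp_ge_add_one_self[of "- (\<mu>/\<beta>)"] q2 by simp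
      qed simp
      also have "exp (- (\<mu>/\<beta>)) ^ k = exp (real k * (- (\<mu>/\<beta>)))" by (rule exp_of_nat_mult[symmetric])
      also have "\<dots> \<le> exp (- ln X)" using lnX by simp
      also have "\<dots> = 1 / X" using Xpos by (simp add: exp_minus inverse_eq_divide)
      finally show ?thesis using L0pos by (simp add: mult_right_mono)
    qed
    have delta: "L w0 / X = \<mu> * \<rho>\<^sup>2 / 4 * min 1 (1 / (2 * \<beta>))"
      using L0pos \<mu>_pos rhopos \<beta>_pos by (cases "2*\<beta> \<le> 1") (auto simp: X_def max_def min_def field_simps)
    have claim1: "L (w k) \<le> \<mu> * \<rho>\<^sup>2 / 4 * min 1 (1 / (2 * \<beta>))" using Lk1 delta by simp
    have Lkb: "L (w k) \<le> (1 - q^2) * \<rho>^2 / 8"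
    proof -
      have "min 1 (1 / (2 * \<beta>)) \<le> 1 / (2*\<beta>)" by simp
      then have "\<mu> * \<rho>\<^sup>2 / 4 * min 1 (1 / (2 * \<beta>)) \<le> \<mu> * \<rho>\<^sup>2 / 4 * (1 / (2*\<beta>))"
        using \<mu>_pos by (intro mult_left_mono) auto
      also have "\<dots> = (1 - q^2) * \<rho>^2 / 8" using \<beta>_pos by (simp only: q2) (simp add: field_simps)
      finally show ?thesis using claim1 by linarith
    qed
    have Lk0: "L (w k) \<ge> 0" by (rule Lnn)
    have hess: "v \<bullet> (HL (ws + t *\<^sub>R v) *v v) \<ge> v \<bullet> (HL ws *v v) - M * norm v ^ 3"
      if t: "0 \<le> t" "t \<le> 1" for t
    proof -
      define p where "p = ws + t *\<^sub>R v"
      have "p = (1 - t) *\<^sub>R ws + t *\<^sub>R w k" by (simp add: p_def v_def algebra_simps)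
      also have "\<dots> \<in> cball w0 R" using convexD[OF convex_cball wsball inball[of k], of "1-t" t] t by simp
      finally have pb: "p \<in> cball w0 (2*R)" using R0 by auto
      have wsb: "ws \<in> cball w0 (2*R)" using wsball R0 by auto
      define D where "D = HL p - HL ws"
      have ineq: "\<bar>v \<bullet> (D *v v)\<bar> \<le> opnorm D * (norm v)^2"
      proof -
        have "\<bar>v \<bullet> (D *v v)\<bar> \<le> norm v * norm (D *v v)" by (rule Cauchy_Schwarz_ineq2)
        also have "norm (D *v v) \<le> opnorm D * norm v"
          unfolding opnorm_def using onorm[OF matrix_vector_mul_bounded_linear[of D]] by simp
        then have "norm v * norm (D *v v) \<le> norm v * (opnorm D * norm v)" by (intro mult_left_mono) auto
        finally show ?thesis by (simp add: power2_eq_square algebra_simps)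
      qed
      have opb: "opnorm D \<le> M * norm v"
      proof (cases "p = ws")
        case True
        then have "D = 0" by (simp add: D_def)
        then have "opnorm D = 0" by (simp add: opnorm_def onorm_zero)
        then show ?thesis using M1 by simp
      next
        case False
        have op0: "opnorm D \<ge> 0" unfolding opnorm_def by (rule onorm_pos_le[OF matrix_vector_mul_bounded_linear])
        have np: "norm (p - ws) = t * norm v" using t by (simp add: p_def)
        have npos: "norm (p - ws) > 0" using False by simp
        have "opnorm D / norm (p - ws) \<in> lip_quots (cball w0 (2 * R)) HL"
          unfolding lip_quots_def D_def using pb wsb False by blast
        then have le: "opnorm D / norm (p - ws) \<le> lip_const (cball w0 (2 * R)) HL"
          unfolding lip_const_def by (rule cSup_upper[OF _ HL_lip])
        then have lc0: "lip_const (cball w0 (2 * R)) HL \<ge> 0" using op0 npos by (smt (verit) divide_nonneg_pos)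
        have "opnorm D \<le> lip_const (cball w0 (2 * R)) HL * norm (p - ws)" using le npos by (simp add: pos_divide_le_eq)
        also have "\<dots> \<le> M * norm (p - ws)" using Mlip by (intro mult_right_mono) auto
        also have "\<dots> = M * t * norm v" using np by simp
        also have "\<dots> \<le> M * norm v" using t M1 by (simp add: mult_left_le_one_le mult.assoc mult_le_cancel_left1)
        finally show ?thesis .
      qed
      have "v \<bullet> (HL p *v v) - v \<bullet> (HL ws *v v) = v \<bullet> (D *v v)"
        by (simp add: D_def matrix_vector_mult_diff_rdistrib inner_diff_right)
      moreover have "opnorm D * (norm v)^2 \<le> M * norm v * (norm v)^2" using opb by (intro mult_right_mono) auto
      moreover have "M * norm v * (norm v)^2 = M * norm v ^ 3" by (simp add: power3_eq_cube power2_eq_square)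
      ultimately show ?thesis using ineq unfolding p_def by linarith
    qed
    have tay: "v \<bullet> (HL ws *v v) \<le> 2 * L (ws + v) + M * norm v ^ 3"
      by (rule taylor_lb[OF L_grad L_hess Lws Gws hess])
    have wsv: "ws + v = w k" by (simp add: v_def)
    have nv2: "(norm v)^2 \<le> (1+q)^2 * (2/\<mu>) * L (w k)"
    proof -
      have "(norm v)^2 \<le> (K * s k)^2" using nv by (intro power_mono) auto
      also have "\<dots> = (1+q)^2 * (2/\<mu>) * L (w k)" using \<mu>_pos sk2 by (simp add: K_def power_mult_distrib)
      finally show ?thesis .
    qed
    have muv: "\<mu> * (norm v)^2 \<le> 2 * (1+q)^2 * L (w k)"
    proof -
      have "\<mu> * (norm v)^2 \<le> \<mu> * ((1+q)^2 * (2/\<mu>) * L (w k))" using nv2 \<mu>_pos by (intro mult_left_mono) auto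
      then show ?thesis using \<mu>_pos by (simp add: field_simps)
    qed
    have vsmall: "(norm v)^2 \<le> \<rho>^2 / \<beta>"
    proof -
      have "(1+q)^2 \<le> 2^2" using q0 q1 by (intro power_mono) auto
      then have "(1+q)^2 \<le> 4" by simp
      then have "(1+q)^2 * ((2/\<mu>) * L (w k)) \<le> 4 * ((2/\<mu>) * L (w k))" using \<mu>_pos Lk0 by (intro mult_right_mono) auto
      also have "(2/\<mu>) * L (w k) \<le> (2/\<mu>) * ((1 - q^2) * \<rho>^2 / 8)" using Lkb \<mu>_pos by (intro mult_left_mono) auto
      also have "4 * ((2/\<mu>) * ((1 - q^2) * \<rho>^2 / 8)) = \<rho>^2 / \<beta>" using \<mu>_pos \<beta>_pos by (simp only: q2) (simp add: field_simps)
      finally show ?thesis using nv2 by (simp add: mult.assoc)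
    qed
    have p32: "\<mu> powr (3/2) = \<mu> * sqrt \<mu>"
    proof -
      have "\<mu> powr (3/2) = \<mu> powr (1 + 1/2)" by simp
      also have "\<dots> = \<mu> * sqrt \<mu>" using \<mu>_pos by (subst powr_add) (simp add: powr_half_sqrt)
      finally show ?thesis .
    qed
    have Mrho: "M * \<rho> \<le> \<beta> * sqrt \<beta> / 76"
    proof -
      have r1: "\<rho> \<le> \<epsilon>loc / (19 * sqrt (\<beta> / \<mu>))" unfolding \<rho>_def by (rule Min_le[OF finr]) simp
      have sb: "sqrt (\<beta> / \<mu>) \<ge> 1" using mub \<mu>_pos by simp
      have "\<epsilon>loc / (19 * sqrt (\<beta> / \<mu>)) \<le> \<epsilon>loc / 19" using sb eloc0 by (intro divide_left_mono) auto
      then have "\<rho> \<le> \<epsilon>loc / 19" using r1 by linarith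
      then have "M * \<rho> \<le> M * (\<epsilon>loc / 19)" using M1 by (intro mult_left_mono) auto
      also have "M * (\<epsilon>loc / 19) = \<epsilon> * (\<mu> * sqrt \<mu>) / 76" using M1 by (simp add: \<epsilon>loc_def p32 field_simps)
      also have "\<dots> \<le> 1 * (\<mu> * sqrt \<mu>) / 76" using \<epsilon>_bounds \<mu>_pos by (intro divide_right_mono mult_right_mono) auto
      also have "\<dots> \<le> \<beta> * sqrt \<beta> / 76" using mub \<mu>_pos by (simp add: mult_mono)
      finally show ?thesis .
    qed
    have Mv: "M * norm v \<le> \<beta> / 76"
    proof -
      have "norm v \<le> sqrt (\<rho>^2 / \<beta>)" using vsmall by (simp add: real_le_rsqrt)
      also have "\<dots> = \<rho> / sqrt \<beta>" using rhopos by (simp add: real_sqrt_divide)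
      finally have "M * norm v \<le> M * (\<rho> / sqrt \<beta>)" using M1 by (intro mult_left_mono) auto
      also have "\<dots> = (M * \<rho>) / sqrt \<beta>" by simp
      also have "\<dots> \<le> (\<beta> * sqrt \<beta> / 76) / sqrt \<beta>" using Mrho \<beta>_pos by (intro divide_right_mono) auto
      also have "\<dots> = \<beta> / 76" using \<beta>_pos by simp
      finally show ?thesis .
    qed
    have cube: "M * norm v ^ 3 \<le> \<rho>^2 / 76"
    proof -
      have "M * norm v ^ 3 = (M * norm v) * (norm v)^2" by (simp add: power3_eq_cube power2_eq_square)
      also have "\<dots> \<le> (\<beta> / 76) * (\<rho>^2 / \<beta>)" using Mv vsmall M1 \<beta>_pos by (intro mult_mono) auto
      also have "\<dots> = \<rho>^2 / 76" using \<beta>_pos by simp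
      finally show ?thesis .
    qed
    have poly: "(2 + 2*q + q^2) * (1 - q^2) \<le> 3"
    proof -
      have "0 \<le> (1-q)^2 + 2*q^3 + q^4" using q0 by simp
      then show ?thesis by (simp add: algebra_simps power2_eq_square power3_eq_cube power4_eq_xxxx)
    qed
    have tot: "v \<bullet> (HL ws *v v) + \<mu> * (norm v)^2 \<le> \<rho>^2"
    proof -
      have t1: "v \<bullet> (HL ws *v v) + \<mu> * (norm v)^2 \<le> 2 * (2 + 2*q + q^2) * L (w k) + M * norm v ^ 3"
        using tay muv wsv by (simp add: power2_eq_square algebra_simps)
      have t2: "2 * (2 + 2*q + q^2) * L (w k) \<le> 2 * (2 + 2*q + q^2) * ((1 - q^2) * \<rho>^2 / 8)"
        using Lkb q0 by (intro mult_left_mono) auto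
      have t3: "2 * (2 + 2*q + q^2) * ((1 - q^2) * \<rho>^2 / 8) = ((2 + 2*q + q^2) * (1 - q^2)) * \<rho>^2 / 4"
        by (simp add: field_simps)
      have t4: "((2 + 2*q + q^2) * (1 - q^2)) * \<rho>^2 / 4 \<le> 3 * \<rho>^2 / 4"
        using poly by (intro divide_right_mono mult_right_mono) auto
      have "\<rho>^2 \<ge> 0" by simp
      then show ?thesis using t1 t2 t3 t4 cube by linarith
    qed
    have An: "Anorm (HL ws + \<mu> *\<^sub>R mat 1) (w k - ws) = sqrt (v \<bullet> (HL ws *v v) + \<mu> * (norm v)^2)"
      unfolding Anorm_def v_def[symmetric]
      by (simp add: matrix_vector_mult_add_rdistrib scaleR_matrix_vector_assoc[symmetric] inner_add_right dot_square_norm)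
    have "Anorm (HL ws + \<mu> *\<^sub>R mat 1) (w k - ws) \<le> \<rho>"
      unfolding An using tot rhopos by (simp add: real_sqrt_le_iff real_le_lsqrt)
    then show ?thesis unfolding wk using claim1 Lws by blast
  qed
qed

end
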